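(* There exists a sequence $\{u_n\}_{n\ge1}\subset\mathscr{X}_1$ which separates the points of $\mathbb{M}^{ac}$ (and hence of $\mathscr{P}^{ac}$), i.e. for any $\mu\neq\nu$ in $\mathbb{M}^{ac}$ there is $n$ with $u_n(\mu)\neq u_n(\nu)$.
   Context: Let $(M,\rho)$ be a Polish space and $\lambda\neq0$ a $\sigma$-finite Radon measure on $M$. $\mathbb{M}$ is the set of finite Borel measures on $M$, $\mathbb{M}^{ac}=\{\mu\in\mathbb{M}:\mu\ll\lambda\}$, $\mathscr{P}^{ac}$ the probability measures in $\mathbb{M}^{ac}$. $\mathscr{X}$ is the class of functions $u(\mu)=g(\mu(f_1),\dots,\mu(f_n))$ on $\mathbb{M}$ with $n\in\mathbb{N}$, $f_i\in C_b(M)$, $g\in C^1_b(\mathbb{R}^n)$, with extrinsic derivative $D^Eu(\mu)(x)=\sum_i\partial_ig(\mu(f_1),\dots,\mu(f_n))f_i(x)$. $\mathscr{X}_1=\{u\in\mathscr{X}:\sup_{\mu\in\mathbb{M}^{ac}}\|D^Eu(\mu)\|_{L^1(\mu)}<\infty\}$. *)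

theory Defs
  imports "HOL-Analysis.Analysis"
begin

text \<open>R^n is represented as the subspace of nat => real of sequences vanishing from index n on.
  On this subspace the product topology of nat => real is the Euclidean topology.\<close>

definition Rn :: "nat \<Rightarrow> (nat \<Rightarrow> real) set" where
  "Rn n = {x. \<forall>i\<ge>n. x i = 0}"

definition C1b_with_partials ::
  "nat \<Rightarrow> ((nat \<Rightarrow> real) \<Rightarrow> real) \<Rightarrow> (nat \<Rightarrow> (nat \<Rightarrow> real) \<Rightarrow> real) \<Rightarrow> bool" where
  "C1b_with_partials n g pd \<longleftrightarrow>
     (\<forall>x\<in>Rn n. \<forall>i<n. ((\<lambda>t. g (x(i := t))) has_real_derivative pd i x) (at (x i)))
   \<and> (\<forall>i<n. continuous_on (Rn n) (pd i))
   \<and> continuous_on (Rn n) g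
   \<and> bounded (g ` Rn n)
   \<and> (\<forall>i<n. bounded (pd i ` Rn n))"

definition finite_borel_measures :: "'a::topological_space measure set" where
  "finite_borel_measures = {\<mu>. sets \<mu> = sets borel \<and> finite_measure \<mu>}"

definition radon_measure :: "'a::topological_space measure \<Rightarrow> bool" where
  "radon_measure L \<longleftrightarrow> sets L = sets borel
     \<and> (\<forall>x. \<exists>U. open U \<and> x \<in> U \<and> emeasure L U < \<infinity>)
     \<and> (\<forall>B\<in>sets borel. emeasure L B = (SUP K\<in>{K. compact K \<and> K \<subseteq> B}. emeasure L K))"

text \<open>M^ac: finite Borel measures absolutely continuous w.r.t. lambda
  (library convention: absolutely_continuous M N means N << M).\<close>

definition Mac :: "'a::topological_space measure \<Rightarrow> 'a measure set" where
  "Mac L = {\<mu>\<in>finite_borel_measures. absolutely_continuous L \<mu>}"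

definition Cb :: "('a::topological_space \<Rightarrow> real) set" where
  "Cb = {f. continuous_on UNIV f \<and> bounded (range f)}"

definition meas_vec :: "nat \<Rightarrow> (nat \<Rightarrow> 'a \<Rightarrow> real) \<Rightarrow> 'a measure \<Rightarrow> (nat \<Rightarrow> real)" where
  "meas_vec n fs \<mu> = (\<lambda>i. if i < n then integral\<^sup>L \<mu> (fs i) else 0)"

definition cyl :: "nat \<Rightarrow> (nat \<Rightarrow> 'a \<Rightarrow> real) \<Rightarrow> ((nat \<Rightarrow> real) \<Rightarrow> real) \<Rightarrow> 'a measure \<Rightarrow> real" where
  "cyl n fs g \<mu> = g (meas_vec n fs \<mu>)"

definition extr_deriv ::
  "nat \<Rightarrow> (nat \<Rightarrow> 'a \<Rightarrow> real) \<Rightarrow> (nat \<Rightarrow> (nat \<Rightarrow> real) \<Rightarrow> real) \<Rightarrow> 'a measure \<Rightarrow> 'a \<Rightarrow> real" where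
  "extr_deriv n fs pd \<mu> x = (\<Sum>i<n. pd i (meas_vec n fs \<mu>) * fs i x)"

definition X1 :: "'a::topological_space measure \<Rightarrow> ('a measure \<Rightarrow> real) set" where
  "X1 L = {u. \<exists>n fs g pd.
      (\<forall>i<n. fs i \<in> Cb) \<and> C1b_with_partials n g pd
      \<and> (\<forall>\<mu>\<in>finite_borel_measures. u \<mu> = cyl n fs g \<mu>)
      \<and> (\<exists>C. \<forall>\<mu>\<in>Mac L. (\<integral>x. \<bar>extr_deriv n fs pd \<mu> x\<bar> \<partial>\<mu>) \<le> C)}"

end

theory Submission
  imports Defs
begin

definition hfun :: "'a::metric_space set \<Rightarrow> nat \<Rightarrow> 'a \<Rightarrow> real" where
  "hfun U m x = (if U = UNIV then 1 else min 1 (real m * infdist x (- U)))"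

lemma hfun_cont: "continuous_on UNIV (hfun U m)"
  unfolding hfun_def by (cases "U = UNIV") (auto intro!: continuous_intros)

lemma hfun_bounds: "0 \<le> hfun U m x" "hfun U m x \<le> 1"
  by (auto simp: hfun_def infdist_nonneg)

lemma hfun_lim:
  assumes "open U"
  shows "(\<lambda>m. hfun U m x) \<longlonglongrightarrow> indicator U x"
proof (cases "U = UNIV")
  case True
  then show ?thesis by (simp add: hfun_def)
next
  case False
  show ?thesis
  proof (cases "x \<in> U")
    case True
    have d: "infdist x (- U) > 0"
      using False True assms by (intro infdist_pos_not_in_closed) auto
    obtain N :: nat where N: "1 / infdist x (- U) < real N"
      using reals_Archimedean2 by blast
    have "eventually (\<lambda>m. hfun U m x = 1) sequentially"
    proof (rule eventually_sequentiallyI[of N])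
      fix m assume "N \<le> m"
      then have "real N \<le> real m" by simp
      with N d have "1 < real m * infdist x (- U)"
        by (simp add: divide_less_eq mult_right_mono less_le_trans mult.commute)
      then show "hfun U m x = 1" using False by (simp add: hfun_def)
    qed
    then have "(\<lambda>m. hfun U m x) \<longlonglongrightarrow> 1"
      by (rule tendsto_eventually)
    then show ?thesis using True by simp
  next
    case xn: False
    then show ?thesis using False by (simp add: hfun_def)
  qed
qed

lemma int_lim:
  fixes \<mu> :: "'a::metric_space measure"
  assumes s: "sets \<mu> = sets borel" and fm: "finite_measure \<mu>" and U: "open U"
  shows "(\<lambda>m. \<integral>x. hfun U m x \<partial>\<mu>) \<longlonglongrightarrow> measure \<mu> U"
proof -
  have sp: "space \<mu> = UNIV" using sets_eq_imp_space_eq[OF s] by simp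
  have meas: "\<And>m. hfun U m \<in> borel_measurable \<mu>"
    using s hfun_cont[of U] by (simp add: measurable_cong_sets[OF s refl] borel_measurable_continuous_onI)
  have Ub: "U \<in> sets \<mu>" using s U by simp
  have "(\<lambda>m. \<integral>x. hfun U m x \<partial>\<mu>) \<longlonglongrightarrow> (\<integral>x. indicator U x \<partial>\<mu> :: real)"
  proof (rule integral_dominated_convergence[where w="\<lambda>x. 1"])
    show "(indicator U :: 'a \<Rightarrow> real) \<in> borel_measurable \<mu>" using Ub by simp
    show "\<And>i. hfun U i \<in> borel_measurable \<mu>" by (rule meas)
    show "integrable \<mu> (\<lambda>x. 1::real)" using fm by (rule finite_measure.integrable_const)
    show "AE x in \<mu>. (\<lambda>i. hfun U i x) \<longlonglongrightarrow> indicator U x"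
      using hfun_lim[OF U] by simp
    show "\<And>i. AE x in \<mu>. norm (hfun U i x) \<le> 1"
      by (intro AE_I2) (metis abs_of_nonneg hfun_bounds real_norm_def)
  qed
  then show ?thesis using sp by simp
qed

lemma one_plus_sq_ne0: "(1::real) + y\<^sup>2 \<noteq> 0"
  by (smt (verit) zero_le_power2)

lemma arctan_abs_le: "\<bar>arctan y\<bar> \<le> pi/2"
  using arctan_bounded[of y] by linarith

lemma inv_le1: "inverse (1 + y\<^sup>2) \<le> (1::real)"
  by (simp add: inverse_le_1_iff)

lemma in_X1:
  fixes f :: "'a::topological_space \<Rightarrow> real"
  assumes fc: "continuous_on UNIV f" and f0: "\<And>x. 0 \<le> f x" and f1: "\<And>x. f x \<le> 1"
  shows "(\<lambda>\<mu>. arctan (\<integral>x. f x \<partial>\<mu>)) \<in> X1 L"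
proof -
  define g :: "(nat \<Rightarrow> real) \<Rightarrow> real" where "g = (\<lambda>v. arctan (v 0))"
  define pd :: "nat \<Rightarrow> (nat \<Rightarrow> real) \<Rightarrow> real" where "pd = (\<lambda>i v. inverse (1 + (v 0)\<^sup>2))"
  define fs :: "nat \<Rightarrow> 'a \<Rightarrow> real" where "fs = (\<lambda>i. f)"
  have "fs 0 \<in> Cb"
    unfolding Cb_def fs_def using fc f0 f1
    by (auto simp: bounded_iff intro!: exI[of _ 1])
  moreover have "C1b_with_partials 1 g pd"
    unfolding C1b_with_partials_def
  proof (intro conjI ballI allI impI)
    fix x :: "nat \<Rightarrow> real" and i :: nat assume "i < 1"
    then show "((\<lambda>t. g (x(i := t))) has_real_derivative pd i x) (at (x i))"
      by (simp add: g_def pd_def DERIV_arctan)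
  next
    fix i :: nat assume "i < 1"
    show "continuous_on (Rn 1) (pd i)"
      unfolding pd_def
      by (intro continuous_intros continuous_on_subset[OF continuous_on_product_coordinates])
         (auto simp: one_plus_sq_ne0)
  next
    show "continuous_on (Rn 1) g"
      unfolding g_def
      by (intro continuous_intros continuous_on_subset[OF continuous_on_product_coordinates]) auto
  next
    show "bounded (g ` Rn 1)"
      unfolding g_def bounded_iff
      using arctan_abs_le by (auto intro!: exI[of _ "pi/2"])
  next
    fix i :: nat assume "i < 1"
    show "bounded (pd i ` Rn 1)"
      unfolding pd_def bounded_iff
      by (auto intro!: exI[of _ 1] simp: inv_le1)
  qed
  moreover have "\<forall>\<mu>\<in>finite_borel_measures. arctan (\<integral>x. f x \<partial>\<mu>) = cyl 1 fs g \<mu>"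
    by (simp add: cyl_def meas_vec_def g_def fs_def)
  moreover have "\<forall>\<mu>\<in>Mac L. (\<integral>x. \<bar>extr_deriv 1 fs pd \<mu> x\<bar> \<partial>\<mu>) \<le> 1"
  proof
    fix \<mu> :: "'a measure"
    define t where "t = (\<integral>x. f x \<partial>\<mu>)"
    have t0: "0 \<le> t" unfolding t_def using f0 by simp
    have "(\<integral>x. \<bar>extr_deriv 1 fs pd \<mu> x\<bar> \<partial>\<mu>) = (\<integral>x. inverse (1 + t\<^sup>2) * f x \<partial>\<mu>)"
      using f0 by (simp add: extr_deriv_def pd_def fs_def meas_vec_def t_def abs_mult add_pos_nonneg)
    also have "\<dots> = t / (1 + t\<^sup>2)" by (simp add: t_def divide_inverse mult.commute)
    also have "\<dots> \<le> 1"
    proof -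
      have "t \<le> 1 + t\<^sup>2"
      proof (cases "t \<le> 1")
        case True then show ?thesis by (simp add: add_increasing2)
        next
        case False then have "t \<le> t\<^sup>2" by (simp add: power2_eq_square)
        then show ?thesis by simp
      qed
      then show ?thesis by (simp add: add_pos_nonneg)
    qed
    finally show "(\<integral>x. \<bar>extr_deriv 1 fs pd \<mu> x\<bar> \<partial>\<mu>) \<le> 1" .
  qed
  ultimately show ?thesis
    unfolding X1_def
    apply (intro CollectI exI[of _ 1] exI[of _ fs] exI[of _ g] exI[of _ pd])
    by auto
qed

theorem lemma2p6:
  fixes L :: "'a::polish_space measure"
  assumes "radon_measure L"
    and "sigma_finite_measure L"
    and "emeasure L (space L) \<noteq> 0"
  shows "\<exists>u :: nat \<Rightarrow> 'a measure \<Rightarrow> real. (\<forall>k. u k \<in> X1 L) \<and>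
           (\<forall>\<mu>\<in>Mac L. \<forall>\<nu>\<in>Mac L. \<mu> \<noteq> \<nu> \<longrightarrow> (\<exists>k. u k \<mu> \<noteq> u k \<nu>))"
proof -
  obtain B :: "'a set set" where B: "countable B" "topological_basis B"
    using ex_countable_basis by blast
  define E where "E = Inter ` {F. finite F \<and> F \<subseteq> B}"
  have Ecount: "countable E"
    unfolding E_def using countable_Collect_finite_subset[OF B(1)] by simp
  have Eopen: "open U" if "U \<in> E" for U
    using that topological_basis_open[OF B(2)] unfolding E_def by auto
  have UE: "UNIV \<in> E" unfolding E_def by (auto intro!: image_eqI[of _ _ "{}"])
  have BE: "B \<subseteq> E" unfolding E_def by (auto intro!: image_eqI[of _ _ "{_}"])
  have Eint: "Int_stable E"
    unfolding Int_stable_def E_def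
  proof (intro ballI)
    fix a b assume "a \<in> Inter ` {F. finite F \<and> F \<subseteq> B}" "b \<in> Inter ` {F. finite F \<and> F \<subseteq> B}"
    then obtain F G where "finite F" "F \<subseteq> B" "a = \<Inter>F" "finite G" "G \<subseteq> B" "b = \<Inter>G" by auto
    then show "a \<inter> b \<in> Inter ` {F. finite F \<and> F \<subseteq> B}"
      by (auto intro!: image_eqI[of _ _ "F \<union> G"])
  qed
  have sigE: "sets borel = sigma_sets UNIV E"
  proof (rule antisym)
    have "sets borel = sigma_sets UNIV B"
      by (subst borel_eq_countable_basis[OF B]) simp
    also have "\<dots> \<subseteq> sigma_sets UNIV E" using BE by (rule sigma_sets_mono')
    finally show "sets borel \<subseteq> sigma_sets UNIV E" .
    show "sigma_sets UNIV E \<subseteq> sets borel"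
      using Eopen by (intro borel_sigma_sets_subset) auto
  qed
  define I where "I = E \<times> (UNIV :: nat set)"
  have Icount: "countable I" unfolding I_def using Ecount by simp
  define u :: "nat \<Rightarrow> 'a measure \<Rightarrow> real" where
    "u k \<mu> = arctan (\<integral>x. hfun (fst (from_nat_into I k)) (snd (from_nat_into I k)) x \<partial>\<mu>)" for k \<mu>
  show ?thesis
  proof (intro exI[of _ u] conjI allI ballI impI)
    fix k
    show "u k \<in> X1 L"
      unfolding u_def
      by (rule in_X1[OF hfun_cont hfun_bounds])
  next
    fix \<mu> \<nu> assume mu: "\<mu> \<in> Mac L" and nu: "\<nu> \<in> Mac L" and ne: "\<mu> \<noteq> \<nu>"
    have ms: "sets \<mu> = sets borel" "finite_measure \<mu>"
      using mu by (auto simp: Mac_def finite_borel_measures_def)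
    have ns: "sets \<nu> = sets borel" "finite_measure \<nu>"
      using nu by (auto simp: Mac_def finite_borel_measures_def)
    show "\<exists>k. u k \<mu> \<noteq> u k \<nu>"
    proof (rule ccontr)
      assume "\<not> (\<exists>k. u k \<mu> \<noteq> u k \<nu>)"
      then have all: "\<And>k. u k \<mu> = u k \<nu>" by blast
      have eqI: "(\<integral>x. hfun U m x \<partial>\<mu>) = (\<integral>x. hfun U m x \<partial>\<nu>)" if UEm: "U \<in> E" for U m
      proof -
        obtain k where "from_nat_into I k = (U, m)"
          using from_nat_into_surj[OF Icount, of "(U, m)"] UEm by (auto simp: I_def)
        then show ?thesis using all[of k] by (simp add: u_def arctan_eq_iff)
      qed
      have meq: "measure \<mu> U = measure \<nu> U" if "U \<in> E" for U
      proof -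
        have "(\<lambda>m. \<integral>x. hfun U m x \<partial>\<mu>) \<longlonglongrightarrow> measure \<mu> U"
          by (rule int_lim[OF ms Eopen[OF that]])
        moreover have "(\<lambda>m. \<integral>x. hfun U m x \<partial>\<mu>) \<longlonglongrightarrow> measure \<nu> U"
          using int_lim[OF ns Eopen[OF that]] eqI[OF that] by simp
        ultimately show ?thesis by (rule LIMSEQ_unique)
      qed
      have "\<mu> = \<nu>"
      proof (rule measure_eqI_generator_eq_countable[of E UNIV \<mu> \<nu> "{UNIV}"])
        show "Int_stable E" by (rule Eint)
        show "E \<subseteq> Pow UNIV" by simp
        show "emeasure \<mu> X = emeasure \<nu> X" if "X \<in> E" for X
          using meq[OF that] finite_measure.emeasure_eq_measure[OF ms(2)]
            finite_measure.emeasure_eq_measure[OF ns(2)] by simp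
        show "sets \<mu> = sigma_sets UNIV E" using ms sigE by simp
        show "sets \<nu> = sigma_sets UNIV E" using ns sigE by simp
        show "{UNIV} \<subseteq> E" using UE by simp
        show "\<Union>{UNIV} = UNIV" by simp
        show "countable {UNIV}" by simp
        show "emeasure \<mu> a \<noteq> \<infinity>" if "a \<in> {UNIV}" for a
          using finite_measure.emeasure_finite[OF ms(2)] by simp
      qed
      with ne show False by simp
    qed
  qed
qed

end
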